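(* Let $G=(g_1,\dots,g_k)\in\mathbb{N}_0^k$ with $g_1>0$, $\gcd(G)=1$ and $c(G)=(c_2,\dots,c_k)$, and let $z_1=1$. Then $G$ is telescopic if and only if for each $i=2,\dots,k$ there exists $z_i\in\mathbb{N}_0$ such that $g_i=z_iC_{i,k}$, $\gcd(z_i,c_i)=1$, and $z_i\in\langle z_jC_{j,i-1} : 1\le j<i\rangle$.
   Context: $\langle A\rangle$ is the set of $\mathbb{N}_0$-linear combinations of the elements of $A$. $G_i=(g_1,\dots,g_i)$, $d_i=\gcd(G_i)$, $c_j=d_{j-1}/d_j$ for $2\le j\le k$; $G$ is telescopic if $c_jg_j\in\langle G_{j-1}\rangle$ for all $2\le j\le k$. $C_{m,n}=\prod_{j=m+1}^n c_j$, with the empty product (when $n\le m$) equal to $1$. *)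

theory Defs
  imports Main
begin

text \<open>A sequence G = (g_1,...,g_k) of naturals is represented by g :: nat => nat,
  only the values at indices 1..k being relevant.\<close>

definition nsg :: "nat set \<Rightarrow> nat set" where
  "nsg A = {x. \<exists>f. x = (\<Sum>a\<in>A. f a * a)}"

definition dseq :: "(nat \<Rightarrow> nat) \<Rightarrow> nat \<Rightarrow> nat" where
  "dseq g i = Gcd (g ` {1..i})"

definition cseq :: "(nat \<Rightarrow> nat) \<Rightarrow> nat \<Rightarrow> nat" where
  "cseq g j = dseq g (j - 1) div dseq g j"

definition Cprod :: "(nat \<Rightarrow> nat) \<Rightarrow> nat \<Rightarrow> nat \<Rightarrow> nat" where
  "Cprod g m n = (\<Prod>j\<in>{m+1..n}. cseq g j)"

definition telescopic :: "(nat \<Rightarrow> nat) \<Rightarrow> nat \<Rightarrow> bool" where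
  "telescopic g k \<longleftrightarrow> (\<forall>j\<in>{2..k}. cseq g j * g j \<in> nsg (g ` {1..j-1}))"

end

theory Submission
  imports Defs
begin

lemma dseq_Suc: "dseq g (Suc n) = gcd (g (Suc n)) (dseq g n)"
proof -
  have "{1..Suc n} = insert (Suc n) {1..n}" by auto
  thus ?thesis unfolding dseq_def by simp
qed

lemma dseq_dvd_g: "1 \<le> j \<Longrightarrow> dseq g j dvd g j"
  unfolding dseq_def by (rule Gcd_dvd) auto

lemma dseq_pos: "g 1 > 0 \<Longrightarrow> 1 \<le> j \<Longrightarrow> dseq g j > 0"
  unfolding dseq_def using Gcd_0_iff[of "g ` {1..j}"]
  by (metis atLeastAtMost_iff bot_nat_0.not_eq_extremum image_subset_iff le_refl singletonD)

lemma dseq_mono: "m \<le> n \<Longrightarrow> dseq g n dvd dseq g m"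
  unfolding dseq_def by (rule Gcd_greatest) (auto intro: Gcd_dvd)

lemma Cprod_eq:
  assumes "g 1 > 0" "1 \<le> m" "m \<le> n"
  shows "Cprod g m n = dseq g m div dseq g n"
  using assms(3)
proof (induction n rule: dec_induct)
  case base
  have "dseq g m > 0" using dseq_pos assms by blast
  thus ?case unfolding Cprod_def by simp
next
  case (step n)
  have "{m+1..Suc n} = insert (Suc n) {m+1..n}" using step by auto
  hence "Cprod g m (Suc n) = cseq g (Suc n) * Cprod g m n"
    unfolding Cprod_def by simp
  also have "\<dots> = (dseq g n div dseq g (Suc n)) * (dseq g m div dseq g n)"
    using step by (simp add: cseq_def)
  also have "\<dots> = dseq g m div dseq g (Suc n)"
  proof -
    obtain x where x: "dseq g n = dseq g (Suc n) * x" using dseq_mono[of n "Suc n" g] by auto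
    obtain y where y: "dseq g m = dseq g n * y" using dseq_mono[of m n g] step by auto
    have p: "dseq g (Suc n) > 0" using dseq_pos assms by simp
    have pn: "dseq g n > 0" using dseq_pos assms step by simp
    show ?thesis using p pn by (simp add: x y)
  qed
  finally show ?case .
qed

lemma nsg_div:
  assumes "finite B" "D > 0" "\<forall>a\<in>B. D dvd a"
  shows "D * z \<in> nsg B \<longleftrightarrow> z \<in> nsg ((\<lambda>a. a div D) ` B)"
proof -
  have inj: "inj_on (\<lambda>a. a div D) B"
  proof (rule inj_onI)
    fix x y assume "x \<in> B" "y \<in> B" "x div D = y div D"
    with assms show "x = y" by (metis dvd_mult_div_cancel)
  qed
  have re: "(\<Sum>b\<in>(\<lambda>a. a div D) ` B. f b * b) = (\<Sum>a\<in>B. f (a div D) * (a div D))" for f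
    by (simp add: sum.reindex[OF inj])
  have mul: "D * (\<Sum>a\<in>B. h a * (a div D)) = (\<Sum>a\<in>B. h a * a)" for h
    unfolding sum_distrib_left
    by (rule sum.cong) (use assms in \<open>auto elim!: dvdE\<close>)
  show ?thesis
  proof
    assume "D * z \<in> nsg B"
    then obtain f where f: "D * z = (\<Sum>a\<in>B. f a * a)" unfolding nsg_def by auto
    have "D * z = D * (\<Sum>a\<in>B. (\<lambda>b. f (b * D)) (a div D) * (a div D))"
      unfolding mul f
      by (rule sum.cong) (use assms in \<open>auto elim!: dvdE\<close>)
    hence "z = (\<Sum>a\<in>B. (\<lambda>b. f (b * D)) (a div D) * (a div D))" using assms by simp
    thus "z \<in> nsg ((\<lambda>a. a div D) ` B)" unfolding nsg_def mem_Collect_eq re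
      by (intro exI[of _ "\<lambda>b. f (b * D)"]) simp
  next
    assume "z \<in> nsg ((\<lambda>a. a div D) ` B)"
    then obtain f where f: "z = (\<Sum>a\<in>B. f (a div D) * (a div D))" unfolding nsg_def re by auto
    show "D * z \<in> nsg B" unfolding nsg_def mem_Collect_eq f mul
      by (intro exI[of _ "\<lambda>a. f (a div D)"]) simp
  qed
qed

theorem mainTheorem8:
  fixes g :: "nat \<Rightarrow> nat" and k :: nat
  assumes "k \<ge> 1" and "g 1 > 0" and "dseq g k = 1"
  shows "telescopic g k \<longleftrightarrow>
    (\<exists>z :: nat \<Rightarrow> nat. z 1 = 1 \<and>
       (\<forall>i\<in>{2..k}. g i = z i * Cprod g i k \<and> gcd (z i) (cseq g i) = 1 \<and>
          z i \<in> nsg ((\<lambda>j. z j * Cprod g j (i - 1)) ` {1..<i})))"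
proof -
  define z0 where "z0 = (\<lambda>j. g j div dseq g j)"
  have pos: "\<And>j. 1 \<le> j \<Longrightarrow> dseq g j > 0" using dseq_pos assms(2) by blast
  have z01: "z0 1 = 1" using assms(2) by (simp add: z0_def dseq_def)
  have Ck: "\<And>i. 1 \<le> i \<Longrightarrow> i \<le> k \<Longrightarrow> Cprod g i k = dseq g i"
    using Cprod_eq[of g, OF assms(2)] assms(3) by simp
  have zC: "z0 j * Cprod g j (i - 1) = g j div dseq g (i - 1)"
    if jj: "1 \<le> j" "j \<le> i - 1" for i j
  proof -
    obtain x where x: "g j = dseq g j * x" using dseq_dvd_g[OF jj(1)] by auto
    obtain y where y: "dseq g j = dseq g (i - 1) * y" using dseq_mono[OF jj(2)] by auto
    have "dseq g (i-1) > 0" using pos jj by simp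
    moreover have "dseq g j > 0" using pos jj by simp
    ultimately show ?thesis using Cprod_eq[of g, OF assms(2) jj] by (simp add: z0_def x y)
  qed
  have key: "cseq g i * g i \<in> nsg (g ` {1..i-1}) \<longleftrightarrow>
      z0 i \<in> nsg ((\<lambda>j. z0 j * Cprod g j (i - 1)) ` {1..<i})" if i: "2 \<le> i" for i
  proof -
    have Si: "i = Suc (i - 1)" using i by simp
    have dvd1: "dseq g i dvd dseq g (i - 1)" using dseq_mono[of "i-1" i g] by simp
    have dvd2: "dseq g i dvd g i" using dseq_dvd_g[of i g] i by simp
    have "cseq g i * g i = dseq g (i - 1) * z0 i"
      using dvd1 dvd2 pos[of i] i by (auto simp: cseq_def z0_def elim!: dvdE)
    moreover have "(\<lambda>j. z0 j * Cprod g j (i - 1)) ` {1..<i} = (\<lambda>a. a div dseq g (i-1)) ` g ` {1..i-1}"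
      unfolding image_image using zC i by (intro image_cong) auto
    moreover have "dseq g (i-1) * z0 i \<in> nsg (g ` {1..i-1}) \<longleftrightarrow>
        z0 i \<in> nsg ((\<lambda>a. a div dseq g (i-1)) ` g ` {1..i-1})"
      by (rule nsg_div) (use pos i in \<open>auto intro: dvd_trans[OF dseq_mono dseq_dvd_g]\<close>)
    ultimately show ?thesis by simp
  qed
  have cop: "gcd (z0 i) (cseq g i) = 1" if i: "2 \<le> i" for i
  proof -
    have Si: "i = Suc (i - 1)" using i by simp
    have d: "dseq g i = gcd (g i) (dseq g (i - 1))" using dseq_Suc[of g "i - 1"] Si by simp
    have "coprime (g i div gcd (g i) (dseq g (i - 1))) (dseq g (i - 1) div gcd (g i) (dseq g (i - 1)))"
      by (rule div_gcd_coprime) (use pos[of "i-1"] i in auto)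
    thus ?thesis unfolding z0_def cseq_def d[symmetric] by simp
  qed
  show ?thesis
  proof
    assume t: "telescopic g k"
    show "\<exists>z :: nat \<Rightarrow> nat. z 1 = 1 \<and>
       (\<forall>i\<in>{2..k}. g i = z i * Cprod g i k \<and> gcd (z i) (cseq g i) = 1 \<and>
          z i \<in> nsg ((\<lambda>j. z j * Cprod g j (i - 1)) ` {1..<i}))"
    proof (intro exI[of _ z0] conjI z01 ballI)
      fix i assume i: "i \<in> {2..k}"
      show "g i = z0 i * Cprod g i k" using Ck[of i] i dseq_dvd_g[of i g]
        by (simp add: z0_def)
      show "gcd (z0 i) (cseq g i) = 1" using cop i by simp
      show "z0 i \<in> nsg ((\<lambda>j. z0 j * Cprod g j (i - 1)) ` {1..<i})"
        using key[of i] t i unfolding telescopic_def by auto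
    qed
  next
    assume "\<exists>z :: nat \<Rightarrow> nat. z 1 = 1 \<and>
       (\<forall>i\<in>{2..k}. g i = z i * Cprod g i k \<and> gcd (z i) (cseq g i) = 1 \<and>
          z i \<in> nsg ((\<lambda>j. z j * Cprod g j (i - 1)) ` {1..<i}))"
    then obtain z where z1: "z 1 = 1" and zz: "\<forall>i\<in>{2..k}. g i = z i * Cprod g i k \<and>
          z i \<in> nsg ((\<lambda>j. z j * Cprod g j (i - 1)) ` {1..<i})" by blast
    have zeq: "z j = z0 j" if "1 \<le> j" "j \<le> k" for j
    proof (cases "j = 1")
      case True thus ?thesis using z1 z01 by simp
    next
      case False
      hence "g j = z j * dseq g j" using zz Ck that by auto
      thus ?thesis using pos[OF that(1)] by (simp add: z0_def)
    qed
    show "telescopic g k" unfolding telescopic_def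
    proof
      fix i assume i: "i \<in> {2..k}"
      have "(\<lambda>j. z j * Cprod g j (i - 1)) ` {1..<i} = (\<lambda>j. z0 j * Cprod g j (i - 1)) ` {1..<i}"
        using zeq i by (intro image_cong) auto
      moreover have "z i = z0 i" using zeq i by auto
      ultimately have "z0 i \<in> nsg ((\<lambda>j. z0 j * Cprod g j (i - 1)) ` {1..<i})" using zz i by metis
      thus "cseq g i * g i \<in> nsg (g ` {1..i - 1})" using key i by auto
    qed
  qed
qed

end
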